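(* If $\mathcal A$ is a finite non-associative algebra which has a qualitative representation, and $n$ is the number of atoms of $\mathcal A$, then $\mathcal A$ has a qualitative representation whose base has at most $3n^3$ points.
   Context: A non-associative algebra is an algebra $(A,0,1,+,-,1',\breve{\ },;)$ such that $(A,0,1,+,-)$ is a boolean algebra (with $x\cdot y=-(-x+-y)$ and $x\le y\iff x+y=y$); $1';x=x=x;1'$, $\breve{\breve x}=x$, $(x;y)\breve{}=\breve y;\breve x$; $\breve 0=x;0=0$, $(x+y)\breve{}=\breve x+\breve y$, $x;(y+z)=x;y+x;z$; and the Peircean law holds: $x;y\cdot\breve z=0$ iff $y;z\cdot\breve x=0$. An atom is a minimal nonzero element. A qualitative representation of $\mathcal A$ over base $D$ is an injective map $\phi:A\to\wp(D\times D)$ such that $0^\phi=\varnothing$, $1^\phi=D\times D$, $(1')^\phi=\{(x,x):x\in D\}$, $(a+b)^\phi=a^\phi\cup b^\phi$, $(-a)^\phi=(D\times D)\setminus a^\phi$, $(\breve a)^\phi=\{(y,x):(x,y)\in a^\phi\}$, and for all $a,b,c\in A$: $c^\phi\supseteq a^\phi\circ b^\phi\iff c\ge a;b$ (where $r\circ s$ is relational composition). *)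

theory Defs
  imports Main
begin

record 'a na_alg =
  carrier :: "'a set"
  zero :: 'a
  one :: 'a
  plus :: "'a \<Rightarrow> 'a \<Rightarrow> 'a"
  compl :: "'a \<Rightarrow> 'a"
  ident :: 'a
  conv :: "'a \<Rightarrow> 'a"
  comp :: "'a \<Rightarrow> 'a \<Rightarrow> 'a"

definition meet :: "'a na_alg \<Rightarrow> 'a \<Rightarrow> 'a \<Rightarrow> 'a" where
  "meet R x y = compl R (plus R (compl R x) (compl R y))"

definition leq :: "'a na_alg \<Rightarrow> 'a \<Rightarrow> 'a \<Rightarrow> bool" where
  "leq R x y \<longleftrightarrow> plus R x y = y"

definition boolean_alg :: "'a na_alg \<Rightarrow> bool" where
  "boolean_alg R \<longleftrightarrow>
    zero R \<in> carrier R \<and> one R \<in> carrier R \<and>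
    (\<forall>x\<in>carrier R. \<forall>y\<in>carrier R. plus R x y \<in> carrier R) \<and>
    (\<forall>x\<in>carrier R. compl R x \<in> carrier R) \<and>
    (\<forall>x\<in>carrier R. \<forall>y\<in>carrier R. plus R x y = plus R y x) \<and>
    (\<forall>x\<in>carrier R. \<forall>y\<in>carrier R. meet R x y = meet R y x) \<and>
    (\<forall>x\<in>carrier R. \<forall>y\<in>carrier R. \<forall>z\<in>carrier R. plus R x (plus R y z) = plus R (plus R x y) z) \<and>
    (\<forall>x\<in>carrier R. \<forall>y\<in>carrier R. \<forall>z\<in>carrier R. meet R x (meet R y z) = meet R (meet R x y) z) \<and>
    (\<forall>x\<in>carrier R. \<forall>y\<in>carrier R. plus R x (meet R x y) = x) \<and>
    (\<forall>x\<in>carrier R. \<forall>y\<in>carrier R. meet R x (plus R x y) = x) \<and>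
    (\<forall>x\<in>carrier R. \<forall>y\<in>carrier R. \<forall>z\<in>carrier R. meet R x (plus R y z) = plus R (meet R x y) (meet R x z)) \<and>
    (\<forall>x\<in>carrier R. \<forall>y\<in>carrier R. \<forall>z\<in>carrier R. plus R x (meet R y z) = meet R (plus R x y) (plus R x z)) \<and>
    (\<forall>x\<in>carrier R. plus R x (compl R x) = one R) \<and>
    (\<forall>x\<in>carrier R. meet R x (compl R x) = zero R)"

definition nonassoc_alg :: "'a na_alg \<Rightarrow> bool" where
  "nonassoc_alg R \<longleftrightarrow>
    boolean_alg R \<and>
    ident R \<in> carrier R \<and>
    (\<forall>x\<in>carrier R. conv R x \<in> carrier R) \<and>
    (\<forall>x\<in>carrier R. \<forall>y\<in>carrier R. comp R x y \<in> carrier R) \<and>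
    (\<forall>x\<in>carrier R. comp R (ident R) x = x \<and> comp R x (ident R) = x) \<and>
    (\<forall>x\<in>carrier R. conv R (conv R x) = x) \<and>
    (\<forall>x\<in>carrier R. \<forall>y\<in>carrier R. conv R (comp R x y) = comp R (conv R y) (conv R x)) \<and>
    conv R (zero R) = zero R \<and>
    (\<forall>x\<in>carrier R. comp R x (zero R) = zero R) \<and>
    (\<forall>x\<in>carrier R. \<forall>y\<in>carrier R. conv R (plus R x y) = plus R (conv R x) (conv R y)) \<and>
    (\<forall>x\<in>carrier R. \<forall>y\<in>carrier R. \<forall>z\<in>carrier R.
        comp R x (plus R y z) = plus R (comp R x y) (comp R x z)) \<and>
    (\<forall>x\<in>carrier R. \<forall>y\<in>carrier R. \<forall>z\<in>carrier R.
        meet R (comp R x y) (conv R z) = zero R \<longleftrightarrow> meet R (comp R y z) (conv R x) = zero R)"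

definition is_atom :: "'a na_alg \<Rightarrow> 'a \<Rightarrow> bool" where
  "is_atom R a \<longleftrightarrow> a \<in> carrier R \<and> a \<noteq> zero R \<and>
     (\<forall>b\<in>carrier R. leq R b a \<longrightarrow> b = zero R \<or> b = a)"

definition atoms :: "'a na_alg \<Rightarrow> 'a set" where
  "atoms R = {a. is_atom R a}"

definition qual_rep :: "'a na_alg \<Rightarrow> 'b set \<Rightarrow> ('a \<Rightarrow> ('b \<times> 'b) set) \<Rightarrow> bool" where
  "qual_rep R D \<phi> \<longleftrightarrow>
    inj_on \<phi> (carrier R) \<and>
    \<phi> (zero R) = {} \<and>
    \<phi> (one R) = D \<times> D \<and>
    \<phi> (ident R) = {(x, x) | x. x \<in> D} \<and>
    (\<forall>a\<in>carrier R. \<forall>b\<in>carrier R. \<phi> (plus R a b) = \<phi> a \<union> \<phi> b) \<and>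
    (\<forall>a\<in>carrier R. \<phi> (compl R a) = (D \<times> D) - \<phi> a) \<and>
    (\<forall>a\<in>carrier R. \<phi> (conv R a) = {(y, x). (x, y) \<in> \<phi> a}) \<and>
    (\<forall>a\<in>carrier R. \<forall>b\<in>carrier R. \<forall>c\<in>carrier R.
        (\<phi> a O \<phi> b \<subseteq> \<phi> c) \<longleftrightarrow> leq R (comp R a b) c)"

end

theory Submission
  imports Defs
begin

theorem mainTheorem6:
  fixes R :: "'a na_alg" and D0 :: "'b set" and \<phi>0 :: "'a \<Rightarrow> ('b \<times> 'b) set"
  assumes "nonassoc_alg R"
    and "finite (carrier R)"
    and "qual_rep R D0 \<phi>0"
  shows "\<exists>(D :: nat set) \<phi>. qual_rep R D \<phi> \<and> finite D \<and>
           card D \<le> 3 * (card (atoms R)) ^ 3"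
proof -
  let ?C = "carrier R"
  let ?\<psi> = "\<phi>0"
  have BA: "boolean_alg R" using assms(1) unfolding nonassoc_alg_def by blast
  have BAs: "zero R \<in> ?C \<and> one R \<in> ?C \<and> (\<forall>x\<in>?C. \<forall>y\<in>?C. plus R x y \<in> ?C) \<and>
     (\<forall>x\<in>?C. compl R x \<in> ?C) \<and> (\<forall>x\<in>?C. plus R x (compl R x) = one R)"
    using BA unfolding boolean_alg_def by (elim conjE) (intro conjI; assumption)
  have zC: "zero R \<in> ?C" and oC: "one R \<in> ?C" using BAs by simp_all
  have plC: "\<And>x y. x \<in> ?C \<Longrightarrow> y \<in> ?C \<Longrightarrow> plus R x y \<in> ?C" using BAs by simp
  have coC: "\<And>x. x \<in> ?C \<Longrightarrow> compl R x \<in> ?C" using BAs by simp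
  have pc: "\<And>x. x \<in> ?C \<Longrightarrow> plus R x (compl R x) = one R" using BAs by simp
  have NA: "ident R \<in> ?C"
    using assms(1) unfolding nonassoc_alg_def by (elim conjE) assumption
  have iC: "ident R \<in> ?C" using NA by simp
  have QR: "inj_on ?\<psi> ?C \<and> ?\<psi> (zero R) = {} \<and> ?\<psi> (one R) = D0 \<times> D0 \<and>
    ?\<psi> (ident R) = {(x, x) | x. x \<in> D0} \<and>
    (\<forall>a\<in>?C. \<forall>b\<in>?C. ?\<psi> (plus R a b) = ?\<psi> a \<union> ?\<psi> b) \<and>
    (\<forall>a\<in>?C. ?\<psi> (compl R a) = (D0 \<times> D0) - ?\<psi> a) \<and>
    (\<forall>a\<in>?C. ?\<psi> (conv R a) = {(y, x). (x, y) \<in> ?\<psi> a}) \<and>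
    (\<forall>a\<in>?C. \<forall>b\<in>?C. \<forall>c\<in>?C.
        (?\<psi> a O ?\<psi> b \<subseteq> ?\<psi> c) \<longleftrightarrow> leq R (comp R a b) c)"
    using assms(3) unfolding qual_rep_def by assumption
  have injp: "inj_on ?\<psi> ?C" using QR by (elim conjE) assumption
  have p0: "?\<psi> (zero R) = {}" using QR by (elim conjE) assumption
  have p1: "?\<psi> (one R) = D0 \<times> D0" using QR by (elim conjE) assumption
  have pid: "?\<psi> (ident R) = {(x, x) | x. x \<in> D0}" using QR by (elim conjE) assumption
  have ppl': "\<forall>a\<in>?C. \<forall>b\<in>?C. ?\<psi> (plus R a b) = ?\<psi> a \<union> ?\<psi> b" using QR by (elim conjE) assumption
  have pco': "\<forall>a\<in>?C. ?\<psi> (compl R a) = (D0 \<times> D0) - ?\<psi> a" using QR by (elim conjE) assumption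
  have pcv': "\<forall>a\<in>?C. ?\<psi> (conv R a) = {(y, x). (x, y) \<in> ?\<psi> a}" using QR by (elim conjE) assumption
  have pcomp': "\<forall>a\<in>?C. \<forall>b\<in>?C. \<forall>c\<in>?C.
        (?\<psi> a O ?\<psi> b \<subseteq> ?\<psi> c) \<longleftrightarrow> leq R (comp R a b) c" using QR by (elim conjE) assumption
  have ppl: "\<And>a b. a\<in>?C \<Longrightarrow> b\<in>?C \<Longrightarrow> ?\<psi> (plus R a b) = ?\<psi> a \<union> ?\<psi> b"
    using ppl' by blast
  have pco: "\<And>a. a\<in>?C \<Longrightarrow> ?\<psi> (compl R a) = (D0 \<times> D0) - ?\<psi> a" using pco' by blast
  have pcv: "\<And>a. a\<in>?C \<Longrightarrow> ?\<psi> (conv R a) = {(y, x). (x, y) \<in> ?\<psi> a}" using pcv' by blast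
  have pcomp: "\<And>a b c. a\<in>?C \<Longrightarrow> b\<in>?C \<Longrightarrow> c\<in>?C \<Longrightarrow>
        (?\<psi> a O ?\<psi> b \<subseteq> ?\<psi> c) \<longleftrightarrow> leq R (comp R a b) c" using pcomp' by blast
  have sub: "\<And>v. v \<in> ?C \<Longrightarrow> ?\<psi> v \<subseteq> D0 \<times> D0"
  proof -
    fix v assume v: "v \<in> ?C"
    have "?\<psi> (plus R v (compl R v)) = ?\<psi> v \<union> ?\<psi> (compl R v)" using ppl[OF v coC[OF v]] .
    then have "?\<psi> v \<union> ?\<psi> (compl R v) = D0 \<times> D0" using pc[OF v] p1 by simp
    then show "?\<psi> v \<subseteq> D0 \<times> D0" by blast
  qed
  have meetC: "\<And>x y. x \<in> ?C \<Longrightarrow> y \<in> ?C \<Longrightarrow> meet R x y \<in> ?C"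
    unfolding meet_def using plC coC by blast
  have pmeet: "\<And>x y. x \<in> ?C \<Longrightarrow> y \<in> ?C \<Longrightarrow> ?\<psi> (meet R x y) = ?\<psi> x \<inter> ?\<psi> y"
  proof -
    fix x y assume x: "x \<in> ?C" and y: "y \<in> ?C"
    have "?\<psi> (meet R x y) = D0 \<times> D0 - ((D0 \<times> D0 - ?\<psi> x) \<union> (D0 \<times> D0 - ?\<psi> y))"
    proof -
      have cx: "compl R x \<in> ?C" and cy: "compl R y \<in> ?C" using x y coC by blast+
      have "?\<psi> (meet R x y) = ?\<psi> (compl R (plus R (compl R x) (compl R y)))" unfolding meet_def ..
      also have "\<dots> = D0 \<times> D0 - ?\<psi> (plus R (compl R x) (compl R y))" using pco plC[OF cx cy] by blast
      also have "\<dots> = D0 \<times> D0 - (?\<psi> (compl R x) \<union> ?\<psi> (compl R y))" using ppl[OF cx cy] by simp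
      also have "\<dots> = D0 \<times> D0 - ((D0 \<times> D0 - ?\<psi> x) \<union> (D0 \<times> D0 - ?\<psi> y))" using pco x y by simp
      finally show ?thesis .
    qed
    then show "?\<psi> (meet R x y) = ?\<psi> x \<inter> ?\<psi> y" using sub[OF x] sub[OF y] by blast
  qed
  have Mex: "\<And>p. p \<in> D0 \<times> D0 \<Longrightarrow> \<exists>c. c \<in> ?C \<and> p \<in> ?\<psi> c \<and> (\<forall>c'\<in>?C. p \<in> ?\<psi> c' \<longrightarrow> ?\<psi> c \<subseteq> ?\<psi> c')"
  proof -
    fix p assume p: "p \<in> D0 \<times> D0"
    let ?A = "?\<psi> ` {c \<in> ?C. p \<in> ?\<psi> c}"
    have "finite ?A" using assms(2) by simp
    moreover have "?A \<noteq> {}" using oC p p1 by blast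
    ultimately obtain S where S: "S \<in> ?A" and Smin: "\<forall>b\<in>?A. b \<le> S \<longrightarrow> S = b"
      using finite_has_minimal[of ?A] by blast
    then obtain c where c: "c \<in> ?C" "p \<in> ?\<psi> c" "S = ?\<psi> c" by blast
    have "\<forall>c'\<in>?C. p \<in> ?\<psi> c' \<longrightarrow> ?\<psi> c \<subseteq> ?\<psi> c'"
    proof (intro ballI impI)
      fix c' assume c': "c' \<in> ?C" "p \<in> ?\<psi> c'"
      have "meet R c c' \<in> ?C" using meetC c c' by blast
      moreover have "?\<psi> (meet R c c') = ?\<psi> c \<inter> ?\<psi> c'" using pmeet c c' by blast
      ultimately have "?\<psi> c \<inter> ?\<psi> c' \<in> ?A" using c c' by (metis (mono_tags, lifting) IntI image_eqI mem_Collect_eq)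
      then have "?\<psi> c = ?\<psi> c \<inter> ?\<psi> c'" using Smin c by blast
      then show "?\<psi> c \<subseteq> ?\<psi> c'" by blast
    qed
    then show "\<exists>c. c \<in> ?C \<and> p \<in> ?\<psi> c \<and> (\<forall>c'\<in>?C. p \<in> ?\<psi> c' \<longrightarrow> ?\<psi> c \<subseteq> ?\<psi> c')"
      using c by blast
  qed
  define m where "m p = (SOME c. c \<in> ?C \<and> p \<in> ?\<psi> c \<and> (\<forall>c'\<in>?C. p \<in> ?\<psi> c' \<longrightarrow> ?\<psi> c \<subseteq> ?\<psi> c'))" for p
  have mP: "\<And>p. p \<in> D0 \<times> D0 \<Longrightarrow> m p \<in> ?C \<and> p \<in> ?\<psi> (m p) \<and> (\<forall>c'\<in>?C. p \<in> ?\<psi> c' \<longrightarrow> ?\<psi> (m p) \<subseteq> ?\<psi> c')"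
    unfolding m_def by (rule someI_ex, rule Mex)
  have same: "\<And>p q v. p \<in> D0 \<times> D0 \<Longrightarrow> q \<in> ?\<psi> (m p) \<Longrightarrow> v \<in> ?C \<Longrightarrow> (q \<in> ?\<psi> v \<longleftrightarrow> p \<in> ?\<psi> v)"
  proof -
    fix p q v assume p: "p \<in> D0 \<times> D0" and q: "q \<in> ?\<psi> (m p)" and v: "v \<in> ?C"
    show "q \<in> ?\<psi> v \<longleftrightarrow> p \<in> ?\<psi> v"
    proof (cases "p \<in> ?\<psi> v")
      case True then show ?thesis using mP[OF p] v q by blast
    next
      case False
      then have "p \<in> ?\<psi> (compl R v)" using pco[OF v] p by blast
      then have "?\<psi> (m p) \<subseteq> ?\<psi> (compl R v)" using mP[OF p] coC[OF v] by blast
      then show ?thesis using False q pco[OF v] by blast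
    qed
  qed
  have matom: "\<And>p. p \<in> D0 \<times> D0 \<Longrightarrow> m p \<in> atoms R"
  proof -
    fix p assume p: "p \<in> D0 \<times> D0"
    have mc: "m p \<in> ?C" and pm: "p \<in> ?\<psi> (m p)" using mP[OF p] by blast+
    have nz: "m p \<noteq> zero R" using pm p0 by auto
    have "\<forall>b\<in>?C. leq R b (m p) \<longrightarrow> b = zero R \<or> b = m p"
    proof (intro ballI impI)
      fix b assume b: "b \<in> ?C" and le: "leq R b (m p)"
      have bs: "?\<psi> b \<subseteq> ?\<psi> (m p)" using le ppl[OF b mc] unfolding leq_def by (metis Un_upper1)
      show "b = zero R \<or> b = m p"
      proof (cases "p \<in> ?\<psi> b")
        case True
        then have "?\<psi> (m p) \<subseteq> ?\<psi> b" using mP[OF p] b by blast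
        then have "?\<psi> b = ?\<psi> (m p)" using bs by blast
        then show ?thesis using injp b mc by (meson inj_onD)
      next
        case False
        have "?\<psi> b = {}"
        proof (rule ccontr)
          assume "?\<psi> b \<noteq> {}"
          then obtain q where q: "q \<in> ?\<psi> b" by blast
          then have "q \<in> ?\<psi> (m p)" using bs by blast
          then show False using same[OF p _ b] q False by blast
        qed
        then have "?\<psi> b = ?\<psi> (zero R)" using p0 by simp
        then show ?thesis using injp b zC by (meson inj_onD)
      qed
    qed
    then show "m p \<in> atoms R" unfolding atoms_def is_atom_def using mc nz by blast
  qed
  define M where "M = m ` (D0 \<times> D0)"
  have MA: "M \<subseteq> atoms R" unfolding M_def using matom by blast
  have finA: "finite (atoms R)"
    using assms(2) unfolding atoms_def is_atom_def by (simp add: rev_finite_subset subset_iff)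
  define T where "T = {(a,b,c). a \<in> M \<and> b \<in> M \<and> c \<in> M \<and>
       (\<exists>x y z. (x,y) \<in> ?\<psi> a \<and> (y,z) \<in> ?\<psi> b \<and> (x,z) \<in> ?\<psi> c)}"
  define w where "w t = (SOME (x,y,z). (x,y) \<in> ?\<psi> (fst t) \<and> (y,z) \<in> ?\<psi> (fst (snd t)) \<and> (x,z) \<in> ?\<psi> (snd (snd t)))" for t
  have wP: "\<And>a b c. (a,b,c) \<in> T \<Longrightarrow> (\<lambda>(x,y,z). (x,y) \<in> ?\<psi> a \<and> (y,z) \<in> ?\<psi> b \<and> (x,z) \<in> ?\<psi> c) (w (a,b,c))"
  proof -
    fix a b c assume "(a,b,c) \<in> T"
    then obtain x y z where "(x,y) \<in> ?\<psi> a \<and> (y,z) \<in> ?\<psi> b \<and> (x,z) \<in> ?\<psi> c" unfolding T_def by blast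
    then have "(\<lambda>(x,y,z). (x,y) \<in> ?\<psi> a \<and> (y,z) \<in> ?\<psi> b \<and> (x,z) \<in> ?\<psi> c) (x,y,z)" by simp
    then show "(\<lambda>(x,y,z). (x,y) \<in> ?\<psi> a \<and> (y,z) \<in> ?\<psi> b \<and> (x,z) \<in> ?\<psi> c) (w (a,b,c))"
      unfolding w_def fst_conv snd_conv by (rule someI)
  qed
  define D' where "D' = (\<Union>t\<in>T. {fst (w t), fst (snd (w t)), snd (snd (w t))})"
  have finT: "finite T"
  proof -
    have "T \<subseteq> M \<times> M \<times> M" unfolding T_def by auto
    moreover have "finite (M \<times> M \<times> M)" using finA MA by (meson finite_SigmaI rev_finite_subset)
    ultimately show ?thesis by (rule rev_finite_subset[rotated])
  qed
  have finD': "finite D'" unfolding D'_def using finT by blast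
  have cardT: "card T \<le> card (atoms R) ^ 3"
  proof -
    have "T \<subseteq> atoms R \<times> atoms R \<times> atoms R" unfolding T_def using MA by auto
    then have "card T \<le> card (atoms R \<times> atoms R \<times> atoms R)"
      using finA by (intro card_mono) auto
    also have "\<dots> = card (atoms R) ^ 3" by (simp add: card_cartesian_product power3_eq_cube)
    finally show ?thesis .
  qed
  have cardD': "card D' \<le> 3 * card (atoms R) ^ 3"
  proof -
    have "card D' \<le> (\<Sum>t\<in>T. card {fst (w t), fst (snd (w t)), snd (snd (w t))})"
      unfolding D'_def using finT by (rule card_UN_le)
    also have "\<dots> \<le> (\<Sum>t\<in>T. 3)"
    proof (rule sum_mono)
      fix t show "card {fst (w t), fst (snd (w t)), snd (snd (w t))} \<le> 3"
        by (simp add: card_insert_if)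
    qed
    also have "\<dots> = 3 * card T" by simp
    finally show ?thesis using cardT by linarith
  qed
  have W: "\<And>x y z. (x,y) \<in> D0 \<times> D0 \<Longrightarrow> (y,z) \<in> D0 \<times> D0 \<Longrightarrow> \<exists>x' y' z'. x' \<in> D' \<and> y' \<in> D' \<and> z' \<in> D' \<and>
      (\<forall>v\<in>?C. ((x',y') \<in> ?\<psi> v \<longleftrightarrow> (x,y) \<in> ?\<psi> v) \<and> ((y',z') \<in> ?\<psi> v \<longleftrightarrow> (y,z) \<in> ?\<psi> v)
         \<and> ((x',z') \<in> ?\<psi> v \<longleftrightarrow> (x,z) \<in> ?\<psi> v))"
  proof -
    fix x y z assume xy: "(x,y) \<in> D0 \<times> D0" and yz: "(y,z) \<in> D0 \<times> D0"
    have xz: "(x,z) \<in> D0 \<times> D0" using xy yz by blast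
    let ?t = "(m (x,y), m (y,z), m (x,z))"
    have tT: "?t \<in> T" unfolding T_def M_def using xy yz xz mP by blast
    obtain x' y' z' where wt: "w ?t = (x',y',z')" by (metis prod_cases3)
    have h: "(x',y') \<in> ?\<psi> (m (x,y)) \<and> (y',z') \<in> ?\<psi> (m (y,z)) \<and> (x',z') \<in> ?\<psi> (m (x,z))"
      using wP[OF tT] wt by simp
    have "x' \<in> D' \<and> y' \<in> D' \<and> z' \<in> D'" unfolding D'_def using tT wt
      by (metis (no_types, lifting) UN_iff fst_conv insert_iff snd_conv)
    then show "?thesis x y z" using h same[OF xy] same[OF yz] same[OF xz] by blast
  qed
  have D'sub: "D' \<subseteq> D0"
  proof
    fix u assume "u \<in> D'"
    then obtain t where t: "t \<in> T" and u: "u \<in> {fst (w t), fst (snd (w t)), snd (snd (w t))}"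
      unfolding D'_def by blast
    obtain a b c where abc: "t = (a,b,c)" by (metis prod_cases3)
    obtain x y z where wt: "w t = (x,y,z)" by (metis prod_cases3)
    have h: "(x,y) \<in> ?\<psi> a \<and> (y,z) \<in> ?\<psi> b \<and> (x,z) \<in> ?\<psi> c" using wP t abc wt by fastforce
    have "a \<in> ?C \<and> b \<in> ?C \<and> c \<in> ?C" using t abc unfolding T_def M_def using mP by blast
    then have "x \<in> D0 \<and> y \<in> D0 \<and> z \<in> D0" using h sub by blast
    then show "u \<in> D0" using u wt by auto
  qed
  obtain h where hb: "bij_betw h {0..<card D'} D'" using ex_bij_betw_nat_finite[OF finD'] by blast
  define D where "D = {0..<card D'}"
  define \<phi> where "\<phi> v = {(i,j). i \<in> D \<and> j \<in> D \<and> (h i, h j) \<in> ?\<psi> v}" for v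
  have hD: "\<And>i. i \<in> D \<Longrightarrow> h i \<in> D'" using hb unfolding D_def bij_betw_def by blast
  have hinj: "inj_on h D" using hb unfolding D_def bij_betw_def by blast
  have hsurj: "\<And>u. u \<in> D' \<Longrightarrow> \<exists>i\<in>D. u = h i" using hb unfolding D_def bij_betw_def by blast
  have key: "\<And>a b. a \<in> ?C \<Longrightarrow> b \<in> ?C \<Longrightarrow> \<phi> a \<subseteq> \<phi> b \<Longrightarrow> ?\<psi> a \<subseteq> ?\<psi> b"
  proof
    fix a b p assume a: "a \<in> ?C" and b: "b \<in> ?C" and ab: "\<phi> a \<subseteq> \<phi> b" and p: "p \<in> ?\<psi> a"
    obtain x y where pxy: "p = (x,y)" by fastforce
    have xy: "(x,y) \<in> D0 \<times> D0" using sub[OF a] p pxy by blast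
    then have yy: "(y,y) \<in> D0 \<times> D0" by blast
    obtain x' y' z' where X: "x' \<in> D'" "y' \<in> D'" and
      Y: "\<forall>v\<in>?C. ((x',y') \<in> ?\<psi> v \<longleftrightarrow> (x,y) \<in> ?\<psi> v)" using W[OF xy yy] by blast
    obtain i j where ij: "i \<in> D" "j \<in> D" "x' = h i" "y' = h j" using hsurj X by metis
    have "(i,j) \<in> \<phi> a" unfolding \<phi>_def using ij Y a p pxy by auto
    then have "(i,j) \<in> \<phi> b" using ab by blast
    then have "(x',y') \<in> ?\<psi> b" unfolding \<phi>_def using ij by auto
    then show "p \<in> ?\<psi> b" using Y b pxy by blast
  qed
  have q1: "inj_on \<phi> ?C"
  proof (rule inj_onI)
    fix a b assume a: "a \<in> ?C" and b: "b \<in> ?C" and e: "\<phi> a = \<phi> b"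
    have "?\<psi> a = ?\<psi> b" using key[OF a b] key[OF b a] e by blast
    then show "a = b" using injp a b by (meson inj_onD)
  qed
  have q2: "\<phi> (zero R) = {}" unfolding \<phi>_def p0 by simp
  have q3: "\<phi> (one R) = D \<times> D" unfolding \<phi>_def p1 using hD D'sub by blast
  have q4: "\<phi> (ident R) = {(x, x) | x. x \<in> D}"
    unfolding \<phi>_def pid using hD D'sub hinj by (auto dest: inj_onD)
  have q5: "\<forall>a\<in>?C. \<forall>b\<in>?C. \<phi> (plus R a b) = \<phi> a \<union> \<phi> b" unfolding \<phi>_def using ppl by auto
  have q6: "\<forall>a\<in>?C. \<phi> (compl R a) = (D \<times> D) - \<phi> a" unfolding \<phi>_def using pco hD D'sub by auto
  have q7: "\<forall>a\<in>?C. \<phi> (conv R a) = {(y, x). (x, y) \<in> \<phi> a}" unfolding \<phi>_def using pcv by auto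
  have q8: "\<forall>a\<in>?C. \<forall>b\<in>?C. \<forall>c\<in>?C. (\<phi> a O \<phi> b \<subseteq> \<phi> c) \<longleftrightarrow> leq R (comp R a b) c"
  proof (intro ballI)
    fix a b c assume a: "a \<in> ?C" and b: "b \<in> ?C" and c: "c \<in> ?C"
    show "(\<phi> a O \<phi> b \<subseteq> \<phi> c) \<longleftrightarrow> leq R (comp R a b) c"
    proof
      assume "leq R (comp R a b) c"
      then have "?\<psi> a O ?\<psi> b \<subseteq> ?\<psi> c" using pcomp a b c by blast
      then show "\<phi> a O \<phi> b \<subseteq> \<phi> c" unfolding \<phi>_def by blast
    next
      assume H: "\<phi> a O \<phi> b \<subseteq> \<phi> c"
      have "?\<psi> a O ?\<psi> b \<subseteq> ?\<psi> c"
      proof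
        fix p assume "p \<in> ?\<psi> a O ?\<psi> b"
        then obtain x y z where pxz: "p = (x,z)" and xy: "(x,y) \<in> ?\<psi> a" and yz: "(y,z) \<in> ?\<psi> b" by blast
        have xy0: "(x,y) \<in> D0 \<times> D0" using xy sub[OF a] by blast
        have yz0: "(y,z) \<in> D0 \<times> D0" using yz sub[OF b] by blast
        obtain x' y' z' where X: "x' \<in> D'" "y' \<in> D'" "z' \<in> D'" and
          Y: "\<forall>v\<in>?C. ((x',y') \<in> ?\<psi> v \<longleftrightarrow> (x,y) \<in> ?\<psi> v) \<and> ((y',z') \<in> ?\<psi> v \<longleftrightarrow> (y,z) \<in> ?\<psi> v)
             \<and> ((x',z') \<in> ?\<psi> v \<longleftrightarrow> (x,z) \<in> ?\<psi> v)" using W[OF xy0 yz0] by blast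
        obtain i j k where ijk: "i \<in> D" "j \<in> D" "k \<in> D" "x' = h i" "y' = h j" "z' = h k"
          using hsurj X by metis
        have "(i,j) \<in> \<phi> a" unfolding \<phi>_def using ijk Y a xy by auto
        moreover have "(j,k) \<in> \<phi> b" unfolding \<phi>_def using ijk Y b yz by auto
        ultimately have "(i,k) \<in> \<phi> c" using H by blast
        then have "(x',z') \<in> ?\<psi> c" unfolding \<phi>_def using ijk by auto
        then show "p \<in> ?\<psi> c" using Y c pxz by blast
      qed
      then show "leq R (comp R a b) c" using pcomp a b c by blast
    qed
  qed
  have "qual_rep R D \<phi>" unfolding qual_rep_def using q1 q2 q3 q4 q5 q6 q7 q8 by blast
  moreover have "finite D" unfolding D_def by simp
  moreover have "card D \<le> 3 * card (atoms R) ^ 3" unfolding D_def using cardD' by simp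
  ultimately show ?thesis by blast
qed

end
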